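(* Let $X\times G\to X$ be a continuous right action of a locally compact Hausdorff group on a Hausdorff space, and let $F\subseteq X$ be a closed paracompact subset such that the action is $F$-proper. Then $FG\subseteq X$ is closed and paracompact.
   Context: For $A,B\subseteq X$ set $\langle A:B\rangle:=\{g\in G: Bg\cap A\neq\emptyset\}$ and write $A\perp B$ if it is relatively compact in $G$. For closed $F$, the action is $F$-proper if for every $x\in X$ there are neighborhoods $V_x\ni x$ and $V_F\supseteq F$ with $V_F\perp V_x$. *)

theory Defs
  imports "HOL-Analysis.Analysis"
begin

text \<open>Paracompact topological space: every open cover has a locally finite open refinement.
  (Hausdorffness is automatic for subspaces of a Hausdorff space.)\<close>
definition paracompact_space :: "'a topology \<Rightarrow> bool" where
  "paracompact_space T \<longleftrightarrow>
     (\<forall>\<U>. (\<forall>U\<in>\<U>. openin T U) \<and> \<Union>\<U> = topspace T \<longrightarrow>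
        (\<exists>\<V>. (\<forall>V\<in>\<V>. openin T V) \<and> \<Union>\<V> = topspace T \<and>
              (\<forall>V\<in>\<V>. \<exists>U\<in>\<U>. V \<subseteq> U) \<and> locally_finite_in T \<V>))"

text \<open>Continuous right action of a topological group (written additively, not necessarily
  commutative) on a space: x.0 = x, (x.g).h = x.(g+h), jointly continuous.\<close>
definition cont_right_action :: "('x::topological_space \<Rightarrow> 'g::topological_group_add \<Rightarrow> 'x) \<Rightarrow> bool" where
  "cont_right_action act \<longleftrightarrow>
     (\<forall>x. act x 0 = x) \<and> (\<forall>x g h. act (act x g) h = act x (g + h)) \<and>
     continuous_on UNIV (\<lambda>p. act (fst p) (snd p))"

definition transporter :: "('x \<Rightarrow> 'g \<Rightarrow> 'x) \<Rightarrow> 'x set \<Rightarrow> 'x set \<Rightarrow> 'g set" where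
  "transporter act A B = {g. (\<lambda>b. act b g) ` B \<inter> A \<noteq> {}}"

definition rel_compact_transp :: "('x \<Rightarrow> 'g::topological_space \<Rightarrow> 'x) \<Rightarrow> 'x set \<Rightarrow> 'x set \<Rightarrow> bool" where
  "rel_compact_transp act A B \<longleftrightarrow> compact (closure (transporter act A B))"

definition is_nhd :: "'a::topological_space set \<Rightarrow> 'a set \<Rightarrow> bool" where
  "is_nhd V S \<longleftrightarrow> (\<exists>U. open U \<and> S \<subseteq> U \<and> U \<subseteq> V)"

definition F_proper :: "('x::topological_space \<Rightarrow> 'g::topological_space \<Rightarrow> 'x) \<Rightarrow> 'x set \<Rightarrow> bool" where
  "F_proper act F \<longleftrightarrow>
     (\<forall>x. \<exists>Vx VF. is_nhd Vx {x} \<and> is_nhd VF F \<and> rel_compact_transp act VF Vx)"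

end

theory Submission
  imports Defs
begin

lemma hausdorff_eucl: "Hausdorff_space (euclidean :: 'a::t2_space topology)"
  unfolding Hausdorff_space_def by (metis disjnt_def hausdorff open_openin topspace_euclidean UNIV_I)

lemma paracompact_regular:
  assumes P: "paracompact_space T" and H: "Hausdorff_space T"
  shows "regular_space T"
  unfolding regular_space_def
proof (intro allI impI)
  fix C a
  assume Ca: "closedin T C \<and> a \<in> topspace T - C"
  define \<U> where "\<U> = {P. openin T P \<and> a \<notin> T closure_of P} \<union> {topspace T - C}"
  have opU: "\<forall>U\<in>\<U>. openin T U"
    using Ca unfolding \<U>_def by auto
  have cov: "\<Union>\<U> = topspace T"
  proof
    show "\<Union>\<U> \<subseteq> topspace T" using opU openin_subset by blast
    show "topspace T \<subseteq> \<Union>\<U>"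
    proof
      fix z assume z: "z \<in> topspace T"
      show "z \<in> \<Union>\<U>"
      proof (cases "z \<in> C")
        case True
        then have "z \<noteq> a" using Ca by auto
        moreover have "a \<in> topspace T" using Ca by blast
        ultimately have "\<exists>P R. openin T P \<and> openin T R \<and> z \<in> P \<and> a \<in> R \<and> disjnt P R"
          using H z unfolding Hausdorff_space_def by simp
        then obtain P R where PR: "openin T P" "openin T R" "z \<in> P" "a \<in> R" "disjnt P R"
          by blast
        have "a \<notin> T closure_of P"
          using PR by (metis disjnt_iff in_closure_of)
        then show ?thesis using PR unfolding \<U>_def by blast
      next
        case False
        then show ?thesis using z unfolding \<U>_def by blast
      qed
    qed
  qed
  obtain \<W> where W: "\<forall>V\<in>\<W>. openin T V" "\<Union>\<W> = topspace T" "\<forall>V\<in>\<W>. \<exists>U\<in>\<U>. V \<subseteq> U"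
    "locally_finite_in T \<W>"
    using P opU cov unfolding paracompact_space_def by metis
  define V where "V = \<Union>{W\<in>\<W>. W \<inter> C \<noteq> {}}"
  have opV: "openin T V" unfolding V_def using W(1) by blast
  have CV: "C \<subseteq> V"
  proof
    fix z assume "z \<in> C"
    then have "z \<in> topspace T" using Ca closedin_subset by blast
    then obtain W0 where "W0 \<in> \<W>" "z \<in> W0" using W(2) by blast
    then show "z \<in> V" unfolding V_def using \<open>z \<in> C\<close> by blast
  qed
  have lf: "locally_finite_in T {W\<in>\<W>. W \<inter> C \<noteq> {}}"
    by (rule locally_finite_in_subset[OF W(4)]) blast
  have aV: "a \<notin> T closure_of V"
  proof
    assume "a \<in> T closure_of V"
    then have "a \<in> \<Union>((\<lambda>S. T closure_of S) ` {W\<in>\<W>. W \<inter> C \<noteq> {}})"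
      unfolding V_def closure_of_locally_finite_Union[OF lf] .
    then obtain W0 where W0: "W0 \<in> \<W>" "W0 \<inter> C \<noteq> {}" "a \<in> T closure_of W0"
      by blast
    obtain U where U: "U \<in> \<U>" "W0 \<subseteq> U" using W(3) W0 by blast
    have "U \<noteq> topspace T - C" using U W0 by blast
    then have "a \<notin> T closure_of U" using U unfolding \<U>_def by blast
    moreover have "T closure_of W0 \<subseteq> T closure_of U" by (rule closure_of_mono[OF U(2)])
    ultimately show False using W0 by blast
  qed
  show "\<exists>U V. openin T U \<and> openin T V \<and> a \<in> U \<and> C \<subseteq> V \<and> disjnt U V"
  proof (intro exI conjI)
    show "openin T (topspace T - T closure_of V)" by (simp add: openin_diff)
    show "openin T V" by (rule opV)
    show "a \<in> topspace T - T closure_of V" using Ca aV by blast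
    show "C \<subseteq> V" by (rule CV)
    show "disjnt (topspace T - T closure_of V) V"
      using closure_of_subset[OF openin_subset[OF opV]] unfolding disjnt_def by blast
  qed
qed

lemma paracompact_closed_refine:
  assumes P: "paracompact_space T" and H: "Hausdorff_space T"
    and opU: "\<forall>U\<in>\<U>. openin T U" and cov: "\<Union>\<U> = topspace T"
  shows "\<exists>\<Z>. (\<forall>Z\<in>\<Z>. closedin T Z) \<and> \<Union>\<Z> = topspace T \<and> (\<forall>Z\<in>\<Z>. \<exists>U\<in>\<U>. Z \<subseteq> U)
            \<and> locally_finite_in T \<Z>"
proof -
  have R: "regular_space T" using paracompact_regular P H by blast
  define \<V> where "\<V> = {V. openin T V \<and> (\<exists>U\<in>\<U>. T closure_of V \<subseteq> U)}"
  have opV: "\<forall>V\<in>\<V>. openin T V" unfolding \<V>_def by blast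
  have covV: "\<Union>\<V> = topspace T"
  proof
    show "\<Union>\<V> \<subseteq> topspace T" using opV openin_subset by blast
    show "topspace T \<subseteq> \<Union>\<V>"
    proof
      fix x assume x: "x \<in> topspace T"
      then obtain U where U: "U \<in> \<U>" "x \<in> U" using cov by blast
      have "closedin T (topspace T - U)" using U opU by blast
      moreover have "x \<in> topspace T - (topspace T - U)" using x U by blast
      ultimately obtain V where V: "openin T V" "x \<in> V" "disjnt (topspace T - U) (T closure_of V)"
        using R unfolding regular_space by blast
      have "T closure_of V \<subseteq> U"
        using V(3) closure_of_subset_topspace[of T V] unfolding disjnt_def by blast
      then show "x \<in> \<Union>\<V>" using V U unfolding \<V>_def by blast
    qed
  qed
  obtain \<W> where W: "\<forall>V\<in>\<W>. openin T V" "\<Union>\<W> = topspace T" "\<forall>V\<in>\<W>. \<exists>U\<in>\<V>. V \<subseteq> U"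
    "locally_finite_in T \<W>"
    using P opV covV unfolding paracompact_space_def by metis
  show ?thesis
  proof (intro exI conjI)
    show "\<forall>Z\<in>(\<lambda>S. T closure_of S) ` \<W>. closedin T Z" by auto
    show "\<Union>((\<lambda>S. T closure_of S) ` \<W>) = topspace T"
    proof
      show "\<Union>((\<lambda>S. T closure_of S) ` \<W>) \<subseteq> topspace T" by (simp add: SUP_le_iff closure_of_subset_topspace)
      show "topspace T \<subseteq> \<Union>((\<lambda>S. T closure_of S) ` \<W>)"
      proof
        fix x assume "x \<in> topspace T"
        then obtain W0 where "W0 \<in> \<W>" "x \<in> W0" using W(2) by blast
        then have "x \<in> T closure_of W0" using closure_of_subset[OF openin_subset] W(1) by blast
        then show "x \<in> \<Union>((\<lambda>S. T closure_of S) ` \<W>)" using \<open>W0 \<in> \<W>\<close> by blast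
      qed
    qed
    show "\<forall>Z\<in>(\<lambda>S. T closure_of S) ` \<W>. \<exists>U\<in>\<U>. Z \<subseteq> U"
    proof
      fix Z assume "Z \<in> (\<lambda>S. T closure_of S) ` \<W>"
      then obtain W0 where "W0 \<in> \<W>" "Z = T closure_of W0" by blast
      then obtain V where V: "V \<in> \<V>" "W0 \<subseteq> V" using W(3) by blast
      then obtain U where "U \<in> \<U>" "T closure_of V \<subseteq> U" unfolding \<V>_def by blast
      then show "\<exists>U\<in>\<U>. Z \<subseteq> U" using closure_of_mono[OF V(2)] \<open>Z = _\<close> by blast
    qed
    show "locally_finite_in T ((\<lambda>S. T closure_of S) ` \<W>)"
      using W(4) locally_finite_in_closure by blast
  qed
qed

lemma michael:
  assumes R: "\<And>\<U>. (\<forall>U\<in>\<U>. openin T U) \<Longrightarrow> \<Union>\<U> = topspace T \<Longrightarrow>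
     (\<exists>\<A>. (\<forall>A\<in>\<A>. closedin T A) \<and> \<Union>\<A> = topspace T \<and> (\<forall>A\<in>\<A>. \<exists>U\<in>\<U>. A \<subseteq> U)
            \<and> locally_finite_in T \<A>)"
  shows "paracompact_space T"
  unfolding paracompact_space_def
proof (intro allI impI)
  fix \<U> assume asm: "(\<forall>U\<in>\<U>. openin T U) \<and> \<Union>\<U> = topspace T"
  obtain \<A> where A: "\<forall>A\<in>\<A>. closedin T A" "\<Union>\<A> = topspace T" "\<forall>A\<in>\<A>. \<exists>U\<in>\<U>. A \<subseteq> U"
    "locally_finite_in T \<A>"
    using R asm by metis
  define \<W> where "\<W> = {W. openin T W \<and> finite {A\<in>\<A>. A \<inter> W \<noteq> {}}}"
  have opW: "\<forall>W\<in>\<W>. openin T W" unfolding \<W>_def by blast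
  have covW: "\<Union>\<W> = topspace T"
  proof
    show "\<Union>\<W> \<subseteq> topspace T" using opW openin_subset by blast
    show "topspace T \<subseteq> \<Union>\<W>"
    proof
      fix x assume "x \<in> topspace T"
      then obtain V where "openin T V" "x \<in> V" "finite {U\<in>\<A>. U \<inter> V \<noteq> {}}"
        using A(4) unfolding locally_finite_in_def by blast
      then show "x \<in> \<Union>\<W>" unfolding \<W>_def by blast
    qed
  qed
  obtain \<C> where C: "\<forall>A\<in>\<C>. closedin T A" "\<Union>\<C> = topspace T" "\<forall>A\<in>\<C>. \<exists>U\<in>\<W>. A \<subseteq> U"
    "locally_finite_in T \<C>"
    using R[OF opW covW] by metis
  define E where "E A = topspace T - \<Union>{C\<in>\<C>. C \<inter> A = {}}" for A
  define u where "u A = (SOME U. U \<in> \<U> \<and> A \<subseteq> U)" for A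
  have u: "u A \<in> \<U> \<and> A \<subseteq> u A" if "A \<in> \<A>" for A
    unfolding u_def using A(3) that by (metis (mono_tags, lifting) someI_ex)
  have opE: "openin T (E A)" for A
  proof -
    have "locally_finite_in T {C\<in>\<C>. C \<inter> A = {}}"
      by (rule locally_finite_in_subset[OF C(4)]) blast
    then have "closedin T (\<Union>{C\<in>\<C>. C \<inter> A = {}})"
      by (rule closedin_locally_finite_Union[rotated]) (use C(1) in blast)
    then show ?thesis unfolding E_def by (simp add: openin_diff)
  qed
  define \<V> where "\<V> = (\<lambda>A. E A \<inter> u A) ` \<A>"
  show "\<exists>\<V>. (\<forall>V\<in>\<V>. openin T V) \<and> \<Union>\<V> = topspace T \<and> (\<forall>V\<in>\<V>. \<exists>U\<in>\<U>. V \<subseteq> U) \<and> locally_finite_in T \<V>"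
  proof (intro exI conjI)
    show "\<forall>V\<in>\<V>. openin T V" unfolding \<V>_def using opE u asm by blast
    show cv: "\<Union>\<V> = topspace T"
    proof
      show "\<Union>\<V> \<subseteq> topspace T" unfolding \<V>_def E_def by blast
      show "topspace T \<subseteq> \<Union>\<V>"
      proof
        fix x assume "x \<in> topspace T"
        then obtain A0 where "A0 \<in> \<A>" "x \<in> A0" using A(2) by blast
        then have "x \<in> E A0 \<inter> u A0" using u[of A0] \<open>x \<in> topspace T\<close> unfolding E_def by blast
        then show "x \<in> \<Union>\<V>" unfolding \<V>_def using \<open>A0 \<in> \<A>\<close> by blast
      qed
    qed
    show "\<forall>V\<in>\<V>. \<exists>U\<in>\<U>. V \<subseteq> U" unfolding \<V>_def using u by blast
    show "locally_finite_in T \<V>"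
      unfolding locally_finite_in_def
    proof (intro conjI ballI)
      show "\<Union>\<V> \<subseteq> topspace T" using cv by simp
      fix x assume "x \<in> topspace T"
      then obtain N where N: "openin T N" "x \<in> N" "finite {U\<in>\<C>. U \<inter> N \<noteq> {}}"
        using C(4) unfolding locally_finite_in_def by blast
      define S where "S = (\<Union>C0\<in>{U\<in>\<C>. U \<inter> N \<noteq> {}}. {A\<in>\<A>. A \<inter> C0 \<noteq> {}})"
      have finS: "finite S"
        unfolding S_def
      proof (rule finite_UN_I[OF N(3)])
        fix C0 assume "C0 \<in> {U\<in>\<C>. U \<inter> N \<noteq> {}}"
        then obtain W where W: "W \<in> \<W>" "C0 \<subseteq> W" using C(3) by blast
        then have "finite {A\<in>\<A>. A \<inter> W \<noteq> {}}" unfolding \<W>_def by blast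
        then show "finite {A\<in>\<A>. A \<inter> C0 \<noteq> {}}"
          by (rule rev_finite_subset) (use W in blast)
      qed
      have "{U\<in>\<V>. U \<inter> N \<noteq> {}} \<subseteq> (\<lambda>A. E A \<inter> u A) ` S"
      proof
        fix V assume "V \<in> {U\<in>\<V>. U \<inter> N \<noteq> {}}"
        then obtain A0 z where A0: "A0 \<in> \<A>" "V = E A0 \<inter> u A0" "z \<in> V" "z \<in> N"
          unfolding \<V>_def by blast
        then have "z \<in> topspace T" unfolding E_def by blast
        then obtain C0 where "C0 \<in> \<C>" "z \<in> C0" using C(2) by blast
        moreover have "C0 \<inter> A0 \<noteq> {}"
          using A0 \<open>C0 \<in> \<C>\<close> \<open>z \<in> C0\<close> unfolding E_def by blast
        ultimately have "A0 \<in> S" unfolding S_def using A0 by blast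
        then show "V \<in> (\<lambda>A. E A \<inter> u A) ` S" using A0 by blast
      qed
      then have "finite {U\<in>\<V>. U \<inter> N \<noteq> {}}"
        using finS finite_surj by blast
      then show "\<exists>V. openin T V \<and> x \<in> V \<and> finite {U\<in>\<V>. U \<inter> V \<noteq> {}}" using N by blast
    qed
  qed
qed


lemma cont_add_left: "continuous_on UNIV (\<lambda>x::'g::topological_group_add. a + x)"
  by (intro continuous_intros)

lemma open_transl:
  fixes S :: "'g::topological_group_add set"
  assumes "open S" shows "open ((\<lambda>x. a + x) ` S)"
proof -
  have "(\<lambda>x. a + x) ` S = (\<lambda>x. -a + x) -` S"
  proof
    show "(\<lambda>x. a + x) ` S \<subseteq> (\<lambda>x. -a + x) -` S" by (auto simp: add.assoc[symmetric])
    show "(\<lambda>x. -a + x) -` S \<subseteq> (\<lambda>x. a + x) ` S"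
    proof
      fix x assume "x \<in> (\<lambda>x. -a + x) -` S"
      then have "-a + x \<in> S" by simp
      moreover have "x = a + (-a + x)" by (simp add: add.assoc[symmetric])
      ultimately show "x \<in> (\<lambda>x. a + x) ` S" by blast
    qed
  qed
  moreover have "open ((\<lambda>x. -a + x) -` S)"
    by (rule open_vimage[OF assms]) (intro continuous_intros)
  ultimately show ?thesis by simp
qed

lemma open_neg:
  fixes S :: "'g::topological_group_add set"
  assumes "open S" shows "open (uminus ` S)"
proof -
  have "uminus ` S = uminus -` S"
    by (auto simp: image_iff) (metis minus_minus)
  moreover have "open (uminus -` S)"
    by (rule open_vimage[OF assms]) (intro continuous_intros)
  ultimately show ?thesis by simp
qed

lemma compact_transl:
  fixes S :: "'g::topological_group_add set"
  assumes "compact S" shows "compact ((\<lambda>x. a + x) ` S)"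
  by (rule compact_continuous_image[OF _ assms]) (intro continuous_intros)

lemma compact_neg:
  fixes S :: "'g::topological_group_add set"
  assumes "compact S" shows "compact (uminus ` S)"
  by (rule compact_continuous_image[OF _ assms]) (intro continuous_intros)

fun sumpow :: "'g::group_add set \<Rightarrow> nat \<Rightarrow> 'g set" where
  "sumpow W 0 = {0}"
| "sumpow W (Suc n) = {a + b | a b. a \<in> sumpow W n \<and> b \<in> W}"

lemma sumpow_compact:
  fixes W :: "'g::topological_group_add set"
  assumes "compact W" shows "compact (sumpow W n)"
proof (induction n)
  case 0 then show ?case by simp
next
  case (Suc n)
  have "sumpow W (Suc n) = (\<lambda>p. fst p + snd p) ` (sumpow W n \<times> W)"
    by (force simp: image_iff)
  moreover have "compact ((\<lambda>p. fst p + snd p) ` (sumpow W n \<times> W))"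
    by (rule compact_continuous_image) (intro continuous_intros, rule compact_Times[OF Suc assms])
  ultimately show ?case by simp
qed

lemma sumpow_interior:
  fixes W :: "'g::topological_group_add set"
  assumes "open V" "0 \<in> V" "V \<subseteq> W"
  shows "sumpow W n \<subseteq> interior (sumpow W (Suc n))"
proof
  fix a assume a: "a \<in> sumpow W n"
  have "(\<lambda>x. a + x) ` V \<subseteq> sumpow W (Suc n)" using a assms(3) by auto
  moreover have "open ((\<lambda>x. a + x) ` V)" by (rule open_transl[OF assms(1)])
  moreover have "a \<in> (\<lambda>x. a + x) ` V" using assms(2) by force
  ultimately show "a \<in> interior (sumpow W (Suc n))" by (meson interior_maximal interior_subset subsetD open_subset_interior)
qed

lemma sumpow_Suc_mono:
  assumes "0 \<in> W" shows "sumpow W n \<subseteq> sumpow W (Suc n)"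
proof
  fix a assume "a \<in> sumpow W n"
  then have "a + 0 \<in> sumpow W (Suc n)" using assms by (simp only: sumpow.simps) blast
  then show "a \<in> sumpow W (Suc n)" by simp
qed

lemma sumpow_mono:
  assumes "0 \<in> W" "n \<le> m" shows "sumpow W n \<subseteq> sumpow W m"
  using assms(2)
proof (induction m)
  case 0 then show ?case by simp
next
  case (Suc m)
  show ?case
  proof (cases "n = Suc m")
    case True then show ?thesis by simp
  next
    case False
    then have "n \<le> m" using Suc.prems by simp
    then show ?thesis using Suc.IH sumpow_Suc_mono[OF assms(1), of m] by blast
  qed
qed

lemma sumpow_add:
  assumes "a \<in> sumpow W n" "b \<in> sumpow W m" shows "a + b \<in> sumpow W (n + m)"
  using assms(2)
proof (induction m arbitrary: b)
  case 0 then show ?case using assms(1) by simp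
next
  case (Suc m)
  then obtain c w where cw: "b = c + w" "c \<in> sumpow W m" "w \<in> W" by auto
  then have "a + c \<in> sumpow W (n + m)" using Suc.IH by blast
  then have "(a + c) + w \<in> sumpow W (Suc (n + m))" using cw(3) by (simp only: sumpow.simps) blast
  then show ?case using cw(1) by (simp add: add.assoc)
qed

lemma sumpow_neg:
  assumes sym: "\<And>x. x \<in> W \<Longrightarrow> -x \<in> W"
  shows "a \<in> sumpow W n \<Longrightarrow> -a \<in> sumpow W n"
proof (induction n arbitrary: a)
  case 0 then show ?case by simp
next
  case (Suc n)
  then obtain c w where cw: "a = c + w" "c \<in> sumpow W n" "w \<in> W" by auto
  have "-w \<in> sumpow W 1"
  proof -
    have "0 + -w \<in> sumpow W (Suc 0)" using sym[OF cw(3)] by (simp only: sumpow.simps) blast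
    then show ?thesis by simp
  qed
  moreover have "-c \<in> sumpow W n" using Suc.IH cw(2) by blast
  ultimately have "-w + -c \<in> sumpow W (1 + n)" by (rule sumpow_add)
  then show ?case using cw(1) by (simp add: minus_add)
qed

lemma glf:
  assumes lc: "locally_compact_space (euclidean :: 'g::{topological_group_add, t2_space} topology)"
  shows "\<exists>\<D>::'g set set. (\<forall>D\<in>\<D>. compact D) \<and> \<Union>\<D> = UNIV \<and>
            (\<forall>x. \<exists>V. open V \<and> x \<in> V \<and> finite {D\<in>\<D>. D \<inter> V \<noteq> {}})"
proof -
  obtain U0 K0 where UK: "open U0" "compact K0" "(0::'g) \<in> U0" "U0 \<subseteq> K0"
    using lc unfolding locally_compact_space_def by auto blast
  define W where "W = K0 \<inter> uminus ` K0"
  define V where "V = U0 \<inter> uminus ` U0"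
  have cW: "compact W" unfolding W_def
    using compact_Int_closed[OF UK(2) compact_imp_closed[OF compact_neg[OF UK(2)]]] .
  have oV: "open V" unfolding V_def using open_neg[OF UK(1)] UK(1) by blast
  have V0: "0 \<in> V" unfolding V_def using UK(3) by force
  have VW: "V \<subseteq> W" unfolding V_def W_def using UK(4) by blast
  have W0: "0 \<in> W" using V0 VW by blast
  have sym: "-x \<in> W" if "x \<in> W" for x
  proof -
    from that obtain k where "x \<in> K0" "k \<in> K0" "x = -k" unfolding W_def by blast
    then show ?thesis unfolding W_def by force
  qed
  define S where "S = sumpow W"
  define H where "H = (\<Union>n. S n)"
  have H0: "0 \<in> H" unfolding H_def S_def by (rule UN_I[of 0]) simp_all
  have Hadd: "a + b \<in> H" if "a \<in> H" "b \<in> H" for a b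
    using that sumpow_add unfolding H_def S_def by blast
  have Hneg: "-a \<in> H" if "a \<in> H" for a
    using that sumpow_neg[OF sym] unfolding H_def S_def by blast
  have Sint: "S n \<subseteq> interior (S (Suc n))" for n
    unfolding S_def by (rule sumpow_interior[OF oV V0 VW])
  have Smono: "S n \<subseteq> S m" if "n \<le> m" for n m
    unfolding S_def by (rule sumpow_mono[OF W0 that])
  have cS: "compact (S n)" for n unfolding S_def by (rule sumpow_compact[OF cW])
  define rep where "rep x = (SOME g. -x + g \<in> H)" for x
  have rep1: "-x + rep x \<in> H" for x
  proof -
    have "-x + x \<in> H" using H0 by simp
    then show ?thesis unfolding rep_def by (rule someI)
  qed
  have rep_eq: "rep x = rep x'" if "-x + x' \<in> H" for x x'
  proof -
    have "{g. -x + g \<in> H} = {g. -x' + g \<in> H}"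
    proof (intro Collect_cong iffI)
      fix g
      assume "-x + g \<in> H"
      moreover have "-x' + x \<in> H" using Hneg[OF that] by (simp add: minus_add)
      ultimately have "(-x' + x) + (-x + g) \<in> H" using Hadd by blast
      then show "-x' + g \<in> H" by (simp add: add.assoc[symmetric])
    next
      fix g
      assume "-x' + g \<in> H"
      then have "(-x + x') + (-x' + g) \<in> H" using Hadd that by blast
      then show "-x + g \<in> H" by (simp add: add.assoc[symmetric])
    qed
    then have "(\<lambda>g. -x + g \<in> H) = (\<lambda>g. -x' + g \<in> H)"
      by (intro ext) (simp add: set_eq_iff)
    then show ?thesis unfolding rep_def by simp
  qed
  define A where "A n = (case n of 0 \<Rightarrow> S 0 | Suc k \<Rightarrow> S (Suc k) - interior (S k))" for n
  have AH: "A n \<subseteq> H" for n unfolding A_def H_def by (cases n) auto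
  have cA: "compact (A n)" for n
    unfolding A_def by (cases n) (auto intro: compact_diff cS)
  have Acov: "\<exists>k. h \<in> A k" if "h \<in> S n" for h n
    using that
  proof (induction n)
    case 0 then show ?case unfolding A_def by (intro exI[of _ 0]) simp
  next
    case (Suc n)
    show ?case
    proof (cases "h \<in> interior (S n)")
      case True then show ?thesis using Suc.IH interior_subset by blast
    next
      case False then show ?thesis using Suc.prems unfolding A_def by (intro exI[of _ "Suc n"]) simp
    qed
  qed
  define \<D> where "\<D> = {(\<lambda>a. rep x + a) ` A n | x n. True}"
  show ?thesis
  proof (intro exI[of _ \<D>] conjI allI ballI)
    show "compact D" if "D \<in> \<D>" for D
      using that cA compact_transl unfolding \<D>_def by blast
    show "\<Union>\<D> = UNIV"
    proof (intro set_eqI iffI)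
      fix x :: 'g
      assume "x \<in> UNIV"
      have "-rep x + x \<in> H" using Hneg[OF rep1[of x]] by (simp add: minus_add)
      then obtain n where "-rep x + x \<in> S n" unfolding H_def by blast
      then obtain k where k: "-rep x + x \<in> A k" using Acov by blast
      have "x = rep x + (-rep x + x)" by (simp add: add.assoc[symmetric])
      then have "x \<in> (\<lambda>a. rep x + a) ` A k" using k by blast
      then show "x \<in> \<Union>\<D>" unfolding \<D>_def by blast
    qed simp
    fix x0 :: 'g
    have "-rep x0 + x0 \<in> H" using Hneg[OF rep1[of x0]] by (simp add: minus_add)
    then obtain n where n: "-rep x0 + x0 \<in> S n" unfolding H_def by blast
    define m where "m = Suc n"
    define Nb where "Nb = (\<lambda>a. rep x0 + a) ` interior (S m)"
    have oO: "open Nb" unfolding Nb_def by (rule open_transl) simp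
    have xO: "x0 \<in> Nb"
    proof -
      have "x0 = rep x0 + (-rep x0 + x0)" by (simp add: add.assoc[symmetric])
      moreover have "-rep x0 + x0 \<in> interior (S m)" using n Sint unfolding m_def by blast
      ultimately show ?thesis unfolding Nb_def by blast
    qed
    have "{D\<in>\<D>. D \<inter> Nb \<noteq> {}} \<subseteq> (\<lambda>k. (\<lambda>a. rep x0 + a) ` A k) ` {..m}"
    proof
      fix D assume "D \<in> {D\<in>\<D>. D \<inter> Nb \<noteq> {}}"
      then obtain x k a b where D: "D = (\<lambda>a. rep x + a) ` A k" and b: "b \<in> A k"
        and a: "a \<in> interior (S m)" and eq: "rep x + b = rep x0 + a"
        unfolding \<D>_def Nb_def by blast
      have aH: "a \<in> H" using a interior_subset unfolding H_def by blast
      have bH: "b \<in> H" using b AH by blast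
      have "-rep x0 + rep x = a + -b"
      proof -
        have "-rep x0 + rep x = -rep x0 + (rep x + b) + -b" by (simp only: add.assoc right_minus add_0_right)
        also have "\<dots> = -rep x0 + (rep x0 + a) + -b" using eq by simp
        also have "\<dots> = a + -b" by (simp add: add.assoc[symmetric])
        finally show ?thesis .
      qed
      then have "-rep x0 + rep x \<in> H" using Hadd[OF aH Hneg[OF bH]] by simp
      then have r1: "rep (rep x0) = rep (rep x)" by (rule rep_eq)
      have "rep x = rep (rep x)" by (rule rep_eq[OF rep1])
      moreover have "rep x0 = rep (rep x0)" by (rule rep_eq[OF rep1])
      ultimately have rr: "rep x = rep x0" using r1 by simp
      then have ab: "a = b" using eq by simp
      have "k \<le> m"
      proof (rule ccontr)
        assume "\<not> k \<le> m"
        then obtain j where j: "k = Suc j" "m \<le> j" by (cases k) auto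
        then have "interior (S m) \<subseteq> interior (S j)" using Smono interior_mono by blast
        then have "b \<in> interior (S j)" using a ab by blast
        then show False using b j(1) unfolding A_def by simp
      qed
      then show "D \<in> (\<lambda>k. (\<lambda>a. rep x0 + a) ` A k) ` {..m}" using D rr by (intro image_eqI[of _ _ k]) auto
    qed
    then have "finite {D\<in>\<D>. D \<inter> Nb \<noteq> {}}" by (rule finite_subset) simp
    then show "\<exists>V. open V \<and> x0 \<in> V \<and> finite {D\<in>\<D>. D \<inter> V \<noteq> {}}" using oO xO by blast
  qed
qed


context
  fixes act :: "'x::t2_space \<Rightarrow> 'g::{topological_group_add, t2_space} \<Rightarrow> 'x"
  assumes A: "cont_right_action act"
begin

lemma act0: "act x 0 = x" using A unfolding cont_right_action_def by blast

lemma act_add: "act (act x g) h = act x (g + h)" using A unfolding cont_right_action_def by blast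

lemma act_inv1: "act (act z m) (-m) = z" by (simp add: act_add act0)

lemma act_inv2: "act (act y (-m)) m = y" by (simp add: act_add act0)

lemma cont_act: "continuous_on UNIV (\<lambda>p. act (fst p) (snd p))"
  using A unfolding cont_right_action_def by blast

lemma cont_actinv: "continuous_on UNIV (\<lambda>p. act (fst p) (- snd p))"
proof -
  have c1: "continuous_on UNIV (\<lambda>p::'x\<times>'g. (fst p, - snd p))"
    by (intro continuous_on_Pair continuous_on_fst continuous_on_snd continuous_on_minus continuous_on_id)
  have c2: "continuous_on ((\<lambda>p::'x\<times>'g. (fst p, - snd p)) ` UNIV) (\<lambda>p. act (fst p) (snd p))"
    by (rule continuous_on_subset[OF cont_act]) simp
  from continuous_on_compose[OF c1 c2] show ?thesis by (simp add: o_def)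
qed

lemma cont_actinv1: "continuous_on S (\<lambda>m. act y (- m))"
proof -
  have c1: "continuous_on UNIV (\<lambda>m::'g. (y, m))"
    by (intro continuous_on_Pair continuous_on_const continuous_on_id)
  have c2: "continuous_on ((\<lambda>m::'g. (y, m)) ` UNIV) (\<lambda>p. act (fst p) (- snd p))"
    by (rule continuous_on_subset[OF cont_actinv]) simp
  from continuous_on_compose[OF c1 c2] have "continuous_on UNIV (\<lambda>m. act y (- m))" by (simp add: o_def)
  then show ?thesis by (rule continuous_on_subset) simp
qed

lemma tube_act:
  assumes "compact M" "open Q" "\<forall>m\<in>M. act y0 (-m) \<in> Q"
  shows "\<exists>Ob. open Ob \<and> y0 \<in> Ob \<and> (\<forall>y\<in>Ob. \<forall>m\<in>M. act y (-m) \<in> Q)"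
proof -
  have "open ((\<lambda>p. act (fst p) (- snd p)) -` Q)"
    by (rule open_vimage[OF assms(2) cont_actinv])
  moreover have "{y0} \<times> M \<subseteq> (\<lambda>p. act (fst p) (- snd p)) -` Q" using assms(3) by auto
  ultimately have "\<exists>X0. y0 \<in> X0 \<and> open X0 \<and> X0 \<times> M \<subseteq> (\<lambda>p. act (fst p) (- snd p)) -` Q"
    by (intro Elementary_Topology.tube_lemma[OF assms(1)])
  then obtain X0 where "y0 \<in> X0" "open X0" "X0 \<times> M \<subseteq> (\<lambda>p. act (fst p) (- snd p)) -` Q"
    by blast
  then show ?thesis by (intro exI[of _ X0]) auto
qed

lemma closed_img:
  assumes "closed Z" "compact M"
  shows "closed {act z m | z m. z \<in> Z \<and> m \<in> M}"
  unfolding closed_def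
proof (rule open_subopen[THEN iffD2], intro ballI)
  fix y assume y: "y \<in> - {act z m | z m. z \<in> Z \<and> m \<in> M}"
  have yn: "\<forall>m\<in>M. act y (-m) \<in> -Z"
  proof
    fix m assume m: "m \<in> M"
    show "act y (-m) \<in> -Z"
    proof
      assume "act y (-m) \<in> Z"
      then have "act (act y (-m)) m \<in> {act z m | z m. z \<in> Z \<and> m \<in> M}" using m by blast
      moreover have "act (act y (-m)) m = y" by (rule act_inv2)
      ultimately show False using y by auto
    qed
  qed
  have "open (-Z)" using assms(1) by (simp add: open_Compl)
  from tube_act[OF assms(2) this yn]
  have "\<exists>Ob. open Ob \<and> y \<in> Ob \<and> (\<forall>y\<in>Ob. \<forall>m\<in>M. act y (-m) \<in> -Z)" .
  then obtain Ob where Ob: "open Ob" "y \<in> Ob" "\<forall>y\<in>Ob. \<forall>m\<in>M. act y (-m) \<in> -Z"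
    by blast
  have "Ob \<subseteq> - {act z m | z m. z \<in> Z \<and> m \<in> M}"
  proof
    fix y' assume "y' \<in> Ob"
    show "y' \<in> - {act z m | z m. z \<in> Z \<and> m \<in> M}"
    proof
      assume "y' \<in> {act z m | z m. z \<in> Z \<and> m \<in> M}"
      then obtain z m where zm: "y' = act z m" "z \<in> Z" "m \<in> M" by blast
      have "act y' (-m) \<in> -Z" using Ob(3) \<open>y' \<in> Ob\<close> zm(3) by blast
      moreover have "act y' (-m) = z" by (simp add: zm(1) act_inv1)
      ultimately show False using zm(2) by simp
    qed
  qed
  then show "\<exists>T. open T \<and> y \<in> T \<and> T \<subseteq> - {act z m | z m. z \<in> Z \<and> m \<in> M}" using Ob by blast
qed

lemma proper_loc:
  assumes "F_proper act F"
  shows "\<exists>Ob C. open Ob \<and> y0 \<in> Ob \<and> compact C \<and> (\<forall>f\<in>F. \<forall>g. act f g \<in> Ob \<longrightarrow> g \<in> C)"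
proof -
  obtain Vx VF where V: "is_nhd Vx {y0}" "is_nhd VF F" "rel_compact_transp act VF Vx"
    using assms unfolding F_proper_def by blast
  obtain Ob where Ob: "open Ob" "y0 \<in> Ob" "Ob \<subseteq> Vx" using V(1) unfolding is_nhd_def by blast
  have FV: "F \<subseteq> VF" using V(2) unfolding is_nhd_def by blast
  define K where "K = closure (transporter act VF Vx)"
  have cK: "compact K" using V(3) unfolding rel_compact_transp_def K_def .
  show ?thesis
  proof (intro exI conjI ballI allI impI)
    show "open Ob" "y0 \<in> Ob" by fact+
    show "compact (uminus ` K)" by (rule compact_neg[OF cK])
    fix f g assume f: "f \<in> F" and fg: "act f g \<in> Ob"
    have "act (act f g) (-g) \<in> VF" using f FV act_inv1 by auto
    moreover have "act (act f g) (-g) \<in> (\<lambda>b. act b (-g)) ` Vx"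
      using fg Ob(3) by (intro imageI) blast
    ultimately have "(\<lambda>b. act b (-g)) ` Vx \<inter> VF \<noteq> {}" by blast
    then have "-g \<in> transporter act VF Vx"
      unfolding transporter_def by simp
    then have "-g \<in> K" unfolding K_def using closure_subset by blast
    moreover have "g = - (-g)" by simp
    ultimately show "g \<in> uminus ` K" by (intro image_eqI[of g uminus "-g"]) simp_all
  qed
qed

lemma closed_orbit:
  assumes cF: "closed F" and pr: "F_proper act F"
  shows "closed {act x g | x g. x \<in> F}"
  unfolding closed_def
proof (rule open_subopen[THEN iffD2], intro ballI)
  fix y0 assume y0: "y0 \<in> - {act x g | x g. x \<in> F}"
  obtain Ob C where OC: "open Ob" "y0 \<in> Ob" "compact C" "\<forall>f\<in>F. \<forall>g. act f g \<in> Ob \<longrightarrow> g \<in> C"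
    using proper_loc[OF pr, of y0] by (elim exE conjE) (rule that)
  define K where "K = {act z m | z m. z \<in> F \<and> m \<in> C}"
  have cK: "closed K" unfolding K_def by (rule closed_img[OF cF OC(3)])
  have KS: "K \<subseteq> {act x g | x g. x \<in> F}" unfolding K_def by blast
  have "y0 \<notin> K" using y0 KS by blast
  moreover have "Ob \<inter> -K \<subseteq> - {act x g | x g. x \<in> F}"
  proof
    fix y assume y: "y \<in> Ob \<inter> -K"
    show "y \<in> - {act x g | x g. x \<in> F}"
    proof
      assume "y \<in> {act x g | x g. x \<in> F}"
      then obtain x g where "y = act x g" "x \<in> F" by blast
      moreover have "act x g \<in> Ob" using y \<open>y = act x g\<close> by blast
      ultimately have "g \<in> C" using OC(4) by blast
      then have "y \<in> K" unfolding K_def using \<open>y = act x g\<close> \<open>x \<in> F\<close> by blast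
      then show False using y by blast
    qed
  qed
  moreover have "open (Ob \<inter> -K)" using OC(1) cK by (simp add: open_Int closed_def)
  ultimately show "\<exists>T. open T \<and> y0 \<in> T \<and> T \<subseteq> - {act x g | x g. x \<in> F}"
    using OC(2) by blast
qed

end

lemma compact_meets_finite:
  assumes "compact C" "\<forall>x. \<exists>V. open V \<and> x \<in> V \<and> finite {D\<in>\<D>. D \<inter> V \<noteq> {}}"
  shows "finite {D\<in>\<D>. D \<inter> C \<noteq> {}}"
proof -
  define \<T> where "\<T> = {V. open V \<and> finite {D\<in>\<D>. D \<inter> V \<noteq> {}}}"
  have "C \<subseteq> \<Union>\<T>" using assms(2) unfolding \<T>_def by blast
  then obtain \<T>' where T': "\<T>' \<subseteq> \<T>" "finite \<T>'" "C \<subseteq> \<Union>\<T>'"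
    using compactE[OF assms(1)] unfolding \<T>_def by blast
  have "{D\<in>\<D>. D \<inter> C \<noteq> {}} \<subseteq> (\<Union>V\<in>\<T>'. {D\<in>\<D>. D \<inter> V \<noteq> {}})" using T'(3) by blast
  moreover have "finite (\<Union>V\<in>\<T>'. {D\<in>\<D>. D \<inter> V \<noteq> {}})"
  proof (rule finite_UN_I[OF T'(2)])
    fix V assume "V \<in> \<T>'"
    then show "finite {D\<in>\<D>. D \<inter> V \<noteq> {}}" using T'(1) unfolding \<T>_def by blast
  qed
  ultimately show ?thesis by (rule finite_subset)
qed


lemma main_refine:
  fixes act :: "'x::t2_space \<Rightarrow> 'g::{topological_group_add, t2_space} \<Rightarrow> 'x"
  assumes lc: "locally_compact_space (euclidean :: 'g topology)"
    and A: "cont_right_action act" and cF: "closed F"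
    and pF: "paracompact_space (subtopology euclidean F)" and pr: "F_proper act F"
    and Ydef: "Y = {act x g | x g. x \<in> F}"
    and opU: "\<forall>U\<in>\<U>. openin (top_of_set Y) U" and cov: "\<Union>\<U> = topspace (top_of_set Y)"
  shows "\<exists>\<A>. (\<forall>A\<in>\<A>. closedin (top_of_set Y) A) \<and> \<Union>\<A> = topspace (top_of_set Y) \<and>
              (\<forall>A\<in>\<A>. \<exists>U\<in>\<U>. A \<subseteq> U) \<and> locally_finite_in (top_of_set Y) \<A>"
proof -
  have tY: "topspace (top_of_set Y) = Y" by simp
  obtain \<D> :: "'g set set" where D: "\<forall>D\<in>\<D>. compact D" "\<Union>\<D> = UNIV"
    "\<forall>x. \<exists>V. open V \<and> x \<in> V \<and> finite {D\<in>\<D>. D \<inter> V \<noteq> {}}"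
    using glf[OF lc] by blast
  have R: "regular_space (euclidean::'g topology)"
    using locally_compact_Hausdorff_imp_regular_space[OF lc hausdorff_eucl] .
  have regG: "\<exists>N'. open N' \<and> d \<in> N' \<and> closure N' \<subseteq> N" if "open N" "d \<in> N" for N and d :: 'g
  proof -
    have "closedin euclidean (-N)" using that by (simp add: closed_closedin[symmetric] closed_Compl)
    moreover have "d \<in> topspace euclidean - (-N)" using that by simp
    ultimately have "\<exists>U. openin euclidean U \<and> d \<in> U \<and> disjnt (-N) (euclidean closure_of U)"
      using R unfolding regular_space by blast
    then obtain U where "openin euclidean U" "d \<in> U" "disjnt (-N) (closure U)" by auto
    then show ?thesis unfolding disjnt_def by (intro exI[of _ U]) auto
  qed
  have K1: "\<exists>Af Ms. open Af \<and> f \<in> Af \<and> finite Ms \<and>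
      (\<forall>M\<in>Ms. compact M \<and> M \<subseteq> D \<and> (\<exists>U\<in>\<U>. \<forall>z\<in>Af \<inter> F. \<forall>m\<in>M. act z m \<in> U)) \<and> D \<subseteq> \<Union>Ms"
    if D\<D>: "D \<in> \<D>" and fF: "f \<in> F" for D f
  proof -
    have loc: "\<exists>Ad N'. open Ad \<and> open N' \<and> f \<in> Ad \<and> d \<in> N' \<and>
                 (\<exists>U\<in>\<U>. \<forall>z\<in>Ad \<inter> F. \<forall>m\<in>closure N'. act z m \<in> U)" for d
    proof -
      have "act f d \<in> Y" using fF Ydef by blast
      then obtain U where U: "U \<in> \<U>" "act f d \<in> U" using cov tY by blast
      then have "openin (top_of_set Y) U" using opU by blast
      then obtain U' where U': "open U'" "U = Y \<inter> U'" unfolding openin_open by blast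
      have "open ((\<lambda>p. act (fst p) (snd p)) -` U')" by (rule open_vimage[OF U'(1) cont_act[OF A]])
      moreover have "(f,d) \<in> (\<lambda>p. act (fst p) (snd p)) -` U'" using U U' by simp
      ultimately obtain Ad N where AN: "open Ad" "open N" "(f,d) \<in> Ad \<times> N"
          "Ad \<times> N \<subseteq> (\<lambda>p. act (fst p) (snd p)) -` U'"
        by (rule open_prod_elim)
      obtain N' where N': "open N'" "d \<in> N'" "closure N' \<subseteq> N" using regG[OF AN(2)] AN(3) by blast
      have "\<forall>z\<in>Ad \<inter> F. \<forall>m\<in>closure N'. act z m \<in> U"
      proof (intro ballI)
        fix z m assume z: "z \<in> Ad \<inter> F" and m: "m \<in> closure N'"
        have "(z, m) \<in> Ad \<times> N" using z m N'(3) by blast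
        then have "act z m \<in> U'" using AN(4) by auto
        moreover have "act z m \<in> Y" using z Ydef by blast
        ultimately show "act z m \<in> U" using U' by blast
      qed
      then show ?thesis using AN N' U by blast
    qed
    have "\<forall>d. \<exists>p. open (fst p) \<and> open (snd p) \<and> f \<in> fst p \<and> d \<in> snd p \<and>
                 (\<exists>U\<in>\<U>. \<forall>z\<in>fst p \<inter> F. \<forall>m\<in>closure (snd p). act z m \<in> U)"
    proof
      fix d
      from loc[of d] obtain Ad N' where "open Ad \<and> open N' \<and> f \<in> Ad \<and> d \<in> N' \<and>
                 (\<exists>U\<in>\<U>. \<forall>z\<in>Ad \<inter> F. \<forall>m\<in>closure N'. act z m \<in> U)" by blast
      then show "\<exists>p. open (fst p) \<and> open (snd p) \<and> f \<in> fst p \<and> d \<in> snd p \<and>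
                 (\<exists>U\<in>\<U>. \<forall>z\<in>fst p \<inter> F. \<forall>m\<in>closure (snd p). act z m \<in> U)"
        by (intro exI[of _ "(Ad, N')"]) simp
    qed
    from choice[OF this] obtain pp where pp: "\<forall>d. open (fst (pp d)) \<and> open (snd (pp d)) \<and> f \<in> fst (pp d) \<and> d \<in> snd (pp d) \<and>
                 (\<exists>U\<in>\<U>. \<forall>z\<in>fst (pp d) \<inter> F. \<forall>m\<in>closure (snd (pp d)). act z m \<in> U)"
      by blast
    have cD: "compact D" using D(1) D\<D> by blast
    have cvd: "D \<subseteq> (\<Union>d\<in>D. snd (pp d))" using pp by blast
    have opn: "\<And>d. d \<in> D \<Longrightarrow> open (snd (pp d))" using pp by blast
    obtain C' where C': "C' \<subseteq> D" "finite C'" "D \<subseteq> (\<Union>d\<in>C'. snd (pp d))"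
      by (rule compactE_image[OF cD opn cvd])
    define Af where "Af = (\<Inter>d\<in>C'. fst (pp d))"
    define Ms where "Ms = (\<lambda>d. D \<inter> closure (snd (pp d))) ` C'"
    show ?thesis
    proof (intro exI[of _ Af] exI[of _ Ms] conjI ballI)
      show "open Af" unfolding Af_def using C'(2) pp by blast
      show "f \<in> Af" unfolding Af_def using pp by blast
      show "finite Ms" unfolding Ms_def using C'(2) by blast
      show "D \<subseteq> \<Union>Ms" unfolding Ms_def using C'(3) closure_subset by blast
      fix M assume "M \<in> Ms"
      then obtain d where d: "d \<in> C'" "M = D \<inter> closure (snd (pp d))" unfolding Ms_def by blast
      show "compact M" unfolding d(2) by (rule compact_Int_closed[OF cD closed_closure])
      show "M \<subseteq> D" using d by blast
      obtain U where U: "U \<in> \<U>" "\<forall>z\<in>fst (pp d) \<inter> F. \<forall>m\<in>closure (snd (pp d)). act z m \<in> U"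
        using pp by blast
      have "Af \<subseteq> fst (pp d)" unfolding Af_def using d(1) by blast
      then show "\<exists>U\<in>\<U>. \<forall>z\<in>Af \<inter> F. \<forall>m\<in>M. act z m \<in> U" using U d(2) by blast
    qed
  qed
  define P where "P D f Af Ms \<longleftrightarrow> open Af \<and> f \<in> Af \<and> finite Ms \<and>
      (\<forall>M\<in>Ms. compact M \<and> M \<subseteq> D \<and> (\<exists>U\<in>\<U>. \<forall>z\<in>Af \<inter> F. \<forall>m\<in>M. act z m \<in> U)) \<and> D \<subseteq> \<Union>Ms"
    for D f Af Ms
  have "\<forall>Df. \<exists>q. fst Df \<in> \<D> \<and> snd Df \<in> F \<longrightarrow> P (fst Df) (snd Df) (fst q) (snd q)"
  proof
    fix Df :: "'g set \<times> 'x"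
    show "\<exists>q. fst Df \<in> \<D> \<and> snd Df \<in> F \<longrightarrow> P (fst Df) (snd Df) (fst q) (snd q)"
    proof (cases "fst Df \<in> \<D> \<and> snd Df \<in> F")
      case True
      then obtain Af Ms where "P (fst Df) (snd Df) Af Ms" using K1[of "fst Df" "snd Df"] unfolding P_def by blast
      then show ?thesis by (intro exI[of _ "(Af, Ms)"]) simp
    next
      case False then show ?thesis by blast
    qed
  qed
  from choice[OF this] obtain qf where qf: "\<forall>Df. fst Df \<in> \<D> \<and> snd Df \<in> F \<longrightarrow> P (fst Df) (snd Df) (fst (qf Df)) (snd (qf Df))"
    by blast
  define Af where "Af D f = fst (qf (D, f))" for D f
  define Mf where "Mf D f = snd (qf (D, f))" for D f
  have AM: "open (Af D f) \<and> f \<in> Af D f \<and> finite (Mf D f) \<and>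
      (\<forall>M\<in>Mf D f. compact M \<and> M \<subseteq> D \<and> (\<exists>U\<in>\<U>. \<forall>z\<in>Af D f \<inter> F. \<forall>m\<in>M. act z m \<in> U)) \<and> D \<subseteq> \<Union>(Mf D f)"
    if "D \<in> \<D>" "f \<in> F" for D f
  proof -
    have "fst (D,f) \<in> \<D> \<and> snd (D,f) \<in> F \<longrightarrow> P (fst (D,f)) (snd (D,f)) (fst (qf (D,f))) (snd (qf (D,f)))"
      using qf by (rule spec)
    then have "P D f (Af D f) (Mf D f)" using that unfolding Af_def Mf_def by simp
    then show ?thesis unfolding P_def .
  qed
  have HF: "Hausdorff_space (top_of_set F)"
    by (rule Hausdorff_space_subtopology[OF hausdorff_eucl])
  have K2: "\<exists>\<Z>. (\<forall>Z\<in>\<Z>. closedin (top_of_set F) Z) \<and> \<Union>\<Z> = F \<and> (\<forall>Z\<in>\<Z>. \<exists>f\<in>F. Z \<subseteq> Af D f \<inter> F)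
              \<and> locally_finite_in (top_of_set F) \<Z>" if "D \<in> \<D>" for D
  proof -
    have op: "\<forall>U\<in>(\<lambda>f. Af D f \<inter> F) ` F. openin (top_of_set F) U"
    proof
      fix U assume "U \<in> (\<lambda>f. Af D f \<inter> F) ` F"
      then obtain f where f: "f \<in> F" "U = Af D f \<inter> F" by blast
      have "openin (top_of_set F) (F \<inter> Af D f)" using AM[OF that f(1)] by (intro openin_open_Int) blast
      then show "openin (top_of_set F) U" using f(2) by (simp add: Int_commute)
    qed
    have cv: "\<Union>((\<lambda>f. Af D f \<inter> F) ` F) = topspace (top_of_set F)"
    proof
      show "\<Union>((\<lambda>f. Af D f \<inter> F) ` F) \<subseteq> topspace (top_of_set F)" by auto
      show "topspace (top_of_set F) \<subseteq> \<Union>((\<lambda>f. Af D f \<inter> F) ` F)"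
      proof
        fix f assume "f \<in> topspace (top_of_set F)"
        then have f: "f \<in> F" by simp
        then have "f \<in> Af D f \<inter> F" using AM[OF that f] by blast
        then show "f \<in> \<Union>((\<lambda>f. Af D f \<inter> F) ` F)" using f by blast
      qed
    qed
    obtain \<Z> where Z: "\<forall>Z\<in>\<Z>. closedin (top_of_set F) Z" "\<Union>\<Z> = topspace (top_of_set F)"
      "\<forall>Z\<in>\<Z>. \<exists>U\<in>(\<lambda>f. Af D f \<inter> F) ` F. Z \<subseteq> U" "locally_finite_in (top_of_set F) \<Z>"
      using paracompact_closed_refine[OF pF HF op cv] by blast
    have Z3: "\<forall>Z\<in>\<Z>. \<exists>f\<in>F. Z \<subseteq> Af D f \<inter> F" using Z(3) by blast
    have Z2: "\<Union>\<Z> = F" using Z(2) by simp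
    show ?thesis using Z(1) Z2 Z3 Z(4) by blast
  qed
  then have "\<forall>D\<in>\<D>. \<exists>\<Z>. (\<forall>Z\<in>\<Z>. closedin (top_of_set F) Z) \<and> \<Union>\<Z> = F \<and> (\<forall>Z\<in>\<Z>. \<exists>f\<in>F. Z \<subseteq> Af D f \<inter> F)
              \<and> locally_finite_in (top_of_set F) \<Z>"
  proof (intro ballI)
    fix D assume "D \<in> \<D>"
    then show "\<exists>\<Z>. (\<forall>Z\<in>\<Z>. closedin (top_of_set F) Z) \<and> \<Union>\<Z> = F \<and> (\<forall>Z\<in>\<Z>. \<exists>f\<in>F. Z \<subseteq> Af D f \<inter> F)
              \<and> locally_finite_in (top_of_set F) \<Z>" by (rule K2)
  qed
  from bchoice[OF this] obtain Zf where Zf0: "\<forall>D\<in>\<D>. (\<forall>Z\<in>Zf D. closedin (top_of_set F) Z) \<and> \<Union>(Zf D) = F \<and>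
        (\<forall>Z\<in>Zf D. \<exists>f\<in>F. Z \<subseteq> Af D f \<inter> F) \<and> locally_finite_in (top_of_set F) (Zf D)"
    by (rule exE) (rule that)
  have Zf: "(\<forall>Z\<in>Zf D. closedin (top_of_set F) Z) \<and> \<Union>(Zf D) = F \<and>
        (\<forall>Z\<in>Zf D. \<exists>f\<in>F. Z \<subseteq> Af D f \<inter> F) \<and> locally_finite_in (top_of_set F) (Zf D)" if "D \<in> \<D>" for D
    using Zf0 that by (rule bspec)
  define fz where "fz D Z = (SOME f. f \<in> F \<and> Z \<subseteq> Af D f \<inter> F)" for D Z
  have fz: "fz D Z \<in> F \<and> Z \<subseteq> Af D (fz D Z) \<inter> F" if "D \<in> \<D>" "Z \<in> Zf D" for D Z
  proof -
    have "\<forall>Z\<in>Zf D. \<exists>f\<in>F. Z \<subseteq> Af D f \<inter> F" using Zf[OF that(1)] by (elim conjE)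
    then have "\<exists>f\<in>F. Z \<subseteq> Af D f \<inter> F" using that(2) by (rule bspec)
    then have "\<exists>f. f \<in> F \<and> Z \<subseteq> Af D f \<inter> F" by (simp only: Bex_def)
    then show ?thesis unfolding fz_def by (rule someI_ex)
  qed
  define img where "img Z M = {act z m | z m. z \<in> Z \<and> m \<in> M}" for Z M
  define \<A> where "\<A> = {img Z M | D Z M. D \<in> \<D> \<and> Z \<in> Zf D \<and> M \<in> Mf D (fz D Z)}"
  have imgY: "img Z M \<subseteq> Y" if "Z \<subseteq> F" for Z M
    unfolding img_def Ydef using that by blast
  have ZF: "Z \<subseteq> F" if "D \<in> \<D>" "Z \<in> Zf D" for D Z
  proof -
    have "\<Union>(Zf D) = F" using Zf[OF that(1)] by (elim conjE)
    then show ?thesis using that(2) by blast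
  qed
  have AY: "\<Union>\<A> \<subseteq> Y"
  proof
    fix y assume "y \<in> \<Union>\<A>"
    then obtain B where B: "B \<in> \<A>" "y \<in> B" by blast
    then obtain D Z M where DZM: "B = img Z M" "D \<in> \<D>" "Z \<in> Zf D"
      unfolding \<A>_def by blast
    have "img Z M \<subseteq> Y" by (rule imgY[OF ZF[OF DZM(2,3)]])
    then show "y \<in> Y" using B(2) DZM(1) by blast
  qed
  have ZC: "closed Z" if "D \<in> \<D>" "Z \<in> Zf D" for D Z
  proof -
    have "\<forall>Z\<in>Zf D. closedin (top_of_set F) Z" using Zf[OF that(1)] by (elim conjE)
    then have "closedin (top_of_set F) Z" using that(2) by (rule bspec)
    then show ?thesis using cF by (rule closedin_closed_trans)
  qed
  have MC: "compact M \<and> M \<subseteq> D \<and> (\<exists>U\<in>\<U>. \<forall>z\<in>Af D (fz D Z) \<inter> F. \<forall>m\<in>M. act z m \<in> U)"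
    if "D \<in> \<D>" "Z \<in> Zf D" "M \<in> Mf D (fz D Z)" for D Z M
  proof -
    have "fz D Z \<in> F" using fz[OF that(1,2)] by (elim conjE)
    from AM[OF that(1) this] have "\<forall>M\<in>Mf D (fz D Z). compact M \<and> M \<subseteq> D \<and> (\<exists>U\<in>\<U>. \<forall>z\<in>Af D (fz D Z) \<inter> F. \<forall>m\<in>M. act z m \<in> U)"
      by (elim conjE)
    then show ?thesis using that(3) by (rule bspec)
  qed
  have McovD: "D \<subseteq> \<Union>(Mf D (fz D Z))" if "D \<in> \<D>" "Z \<in> Zf D" for D Z
  proof -
    have "fz D Z \<in> F" using fz[OF that(1,2)] by (elim conjE)
    from AM[OF that(1) this] show ?thesis by (elim conjE)
  qed
  have MfF: "finite (Mf D (fz D Z))" if "D \<in> \<D>" "Z \<in> Zf D" for D Z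
  proof -
    have "fz D Z \<in> F" using fz[OF that(1,2)] by (elim conjE)
    from AM[OF that(1) this] show ?thesis by (elim conjE)
  qed
  have ZAf: "Z \<subseteq> Af D (fz D Z) \<inter> F" if "D \<in> \<D>" "Z \<in> Zf D" for D Z
    using fz[OF that] by (elim conjE)
  show ?thesis
  proof (intro exI[of _ \<A>] conjI ballI)
    fix A assume "A \<in> \<A>"
    then obtain D Z M where DZM: "A = img Z M" "D \<in> \<D>" "Z \<in> Zf D" "M \<in> Mf D (fz D Z)"
      unfolding \<A>_def by blast
    have cZ: "closed Z" by (rule ZC[OF DZM(2,3)])
    have MCi: "compact M \<and> M \<subseteq> D \<and> (\<exists>U\<in>\<U>. \<forall>z\<in>Af D (fz D Z) \<inter> F. \<forall>m\<in>M. act z m \<in> U)"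
      by (rule MC[OF DZM(2,3,4)])
    then have cM: "compact M" by (elim conjE)
    have clA: "closed A" unfolding DZM(1) img_def by (rule closed_img[OF A cZ cM])
    have AsY: "A \<subseteq> Y" unfolding DZM(1) by (rule imgY[OF ZF[OF DZM(2,3)]])
    have "closedin (top_of_set Y) (Y \<inter> A)" by (rule closedin_closed_Int[OF clA])
    moreover have "Y \<inter> A = A" using AsY by blast
    ultimately show "closedin (top_of_set Y) A" by simp
    obtain U where U: "U \<in> \<U>" "\<forall>z\<in>Af D (fz D Z) \<inter> F. \<forall>m\<in>M. act z m \<in> U"
      using MCi by (elim conjE bexE) (rule that)
    have ZA: "Z \<subseteq> Af D (fz D Z) \<inter> F" by (rule ZAf[OF DZM(2,3)])
    have "A \<subseteq> U"
    proof
      fix y assume "y \<in> A"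
      then obtain z m where zm: "y = act z m" "z \<in> Z" "m \<in> M" unfolding DZM(1) img_def by blast
      have "z \<in> Af D (fz D Z) \<inter> F" using ZA zm(2) by blast
      then show "y \<in> U" using U(2) zm(1,3) by blast
    qed
    then show "\<exists>U\<in>\<U>. A \<subseteq> U" using U(1) by blast
  next
    show cvA: "\<Union>\<A> = topspace (top_of_set Y)"
    proof
      show "\<Union>\<A> \<subseteq> topspace (top_of_set Y)" using AY by (simp only: topspace_subtopology topspace_euclidean Int_UNIV_left)
      show "topspace (top_of_set Y) \<subseteq> \<Union>\<A>"
      proof
        fix y assume "y \<in> topspace (top_of_set Y)"
        then have "y \<in> Y" by simp
        then have "\<exists>x g. y = act x g \<and> x \<in> F" unfolding Ydef by (simp only: mem_Collect_eq)
        then obtain x g where xg: "y = act x g" "x \<in> F" by (elim exE conjE)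
        have "g \<in> \<Union>\<D>" using D(2) by simp
        then obtain D where D1: "D \<in> \<D>" "g \<in> D" by (rule UnionE)
        have "\<Union>(Zf D) = F" using Zf[OF D1(1)] by (elim conjE)
        then have "x \<in> \<Union>(Zf D)" using xg(2) by simp
        then obtain Z where Z1: "Z \<in> Zf D" "x \<in> Z" by (rule UnionE)
        have "D \<subseteq> \<Union>(Mf D (fz D Z))" by (rule McovD[OF D1(1) Z1(1)])
        then obtain M where M1: "M \<in> Mf D (fz D Z)" "g \<in> M" using D1(2) by blast
        have "y \<in> img Z M" unfolding img_def xg(1)
          by (intro CollectI exI[of _ x] exI[of _ g] conjI refl Z1(2) M1(2))
        moreover have "img Z M \<in> \<A>" unfolding \<A>_def
          by (intro CollectI exI[of _ D] exI[of _ Z] exI[of _ M] conjI refl D1(1) Z1(1) M1(1))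
        ultimately show "y \<in> \<Union>\<A>" by blast
      qed
    qed
    show "locally_finite_in (top_of_set Y) \<A>"
      unfolding locally_finite_in_def
    proof (intro conjI ballI)
      show "\<Union>\<A> \<subseteq> topspace (top_of_set Y)" using cvA by simp
      fix y0 assume y0: "y0 \<in> topspace (top_of_set Y)"
      obtain O1 C where OC: "open O1" "y0 \<in> O1" "compact C" "\<forall>f\<in>F. \<forall>g. act f g \<in> O1 \<longrightarrow> g \<in> C"
        using proper_loc[OF A pr, of y0] by (elim exE conjE) (rule that)
      define \<D>0 where "\<D>0 = {D\<in>\<D>. D \<inter> C \<noteq> {}}"
      have fD0: "finite \<D>0" unfolding \<D>0_def by (rule compact_meets_finite[OF OC(3) D(3)])
      have K3: "\<exists>Ob. open Ob \<and> y0 \<in> Ob \<and> finite {Z\<in>Zf D. \<exists>z\<in>Z. \<exists>m\<in>D. act z m \<in> Ob}"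
        if DD: "D \<in> \<D>" for D
      proof -
        define \<Q> where "\<Q> = {Q. open Q \<and> finite {Z\<in>Zf D. Z \<inter> Q \<noteq> {}}}"
        have Qcov: "\<exists>Q\<in>\<Q>. x \<in> Q" for x
        proof (cases "x \<in> F")
          case True
          then have "x \<in> topspace (top_of_set F)" by simp
          have lfZ: "locally_finite_in (top_of_set F) (Zf D)" using Zf[OF DD] by (elim conjE)
          then have "\<exists>V. openin (top_of_set F) V \<and> x \<in> V \<and> finite {Z\<in>Zf D. Z \<inter> V \<noteq> {}}"
            using \<open>x \<in> topspace (top_of_set F)\<close> unfolding locally_finite_in_def by (elim conjE) (rule bspec)
          then obtain V where V: "openin (top_of_set F) V" "x \<in> V" "finite {Z\<in>Zf D. Z \<inter> V \<noteq> {}}"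
            by (elim exE conjE)
          then obtain Q where Q: "open Q" "V = F \<inter> Q" unfolding openin_open by (elim exE conjE)
          have "{Z\<in>Zf D. Z \<inter> Q \<noteq> {}} = {Z\<in>Zf D. Z \<inter> V \<noteq> {}}"
            unfolding Q(2) using ZF[OF DD] by blast
          then have "Q \<in> \<Q>" unfolding \<Q>_def using Q(1) V(3) by simp
          moreover have "x \<in> Q" using V(2) unfolding Q(2) by simp
          ultimately show ?thesis by blast
        next
          case False
          have e: "{Z\<in>Zf D. Z \<inter> (-F) \<noteq> {}} = {}" using ZF[OF DD] by blast
          have f1: "finite {Z\<in>Zf D. Z \<inter> (-F) \<noteq> {}}" unfolding e by (rule finite.emptyI)
          have o1: "open (-F)" using cF by (simp add: open_Compl)
          have "-F \<in> \<Q>" unfolding \<Q>_def by (intro CollectI conjI o1 f1)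
          then show ?thesis using False by blast
        qed
        have cK: "compact ((\<lambda>m. act y0 (-m)) ` D)"
          by (rule compact_continuous_image[OF cont_actinv1[OF A]]) (use D(1) DD in blast)
        have "(\<lambda>m. act y0 (-m)) ` D \<subseteq> \<Union>\<Q>" using Qcov by blast
        moreover have "\<And>B. B \<in> \<Q> \<Longrightarrow> open B" unfolding \<Q>_def by blast
        ultimately obtain \<Q>' where Q': "\<Q>' \<subseteq> \<Q>" "finite \<Q>'" "(\<lambda>m. act y0 (-m)) ` D \<subseteq> \<Union>\<Q>'"
          by (rule compactE[OF cK])
        have oQ: "open (\<Union>\<Q>')" using Q'(1) unfolding \<Q>_def by blast
        have fQ: "finite {Z\<in>Zf D. Z \<inter> \<Union>\<Q>' \<noteq> {}}"
        proof -
          have "{Z\<in>Zf D. Z \<inter> \<Union>\<Q>' \<noteq> {}} \<subseteq> (\<Union>Q\<in>\<Q>'. {Z\<in>Zf D. Z \<inter> Q \<noteq> {}})" by blast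
          moreover have "finite (\<Union>Q\<in>\<Q>'. {Z\<in>Zf D. Z \<inter> Q \<noteq> {}})"
          proof (rule finite_UN_I[OF Q'(2)])
            fix Q assume "Q \<in> \<Q>'"
            then show "finite {Z\<in>Zf D. Z \<inter> Q \<noteq> {}}" using Q'(1) unfolding \<Q>_def by blast
          qed
          ultimately show ?thesis by (rule finite_subset)
        qed
        have inQ: "\<forall>m\<in>D. act y0 (-m) \<in> \<Union>\<Q>'" using Q'(3) by blast
        have cDD: "compact D" using D(1) DD by blast
        from tube_act[OF A cDD oQ inQ]
        obtain Ob where Ob: "open Ob" "y0 \<in> Ob" "\<forall>y\<in>Ob. \<forall>m\<in>D. act y (-m) \<in> \<Union>\<Q>'"
          by (elim exE conjE)
        have "{Z\<in>Zf D. \<exists>z\<in>Z. \<exists>m\<in>D. act z m \<in> Ob} \<subseteq> {Z\<in>Zf D. Z \<inter> \<Union>\<Q>' \<noteq> {}}"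
        proof
          fix Z assume "Z \<in> {Z\<in>Zf D. \<exists>z\<in>Z. \<exists>m\<in>D. act z m \<in> Ob}"
          then obtain z m where zm: "Z \<in> Zf D" "z \<in> Z" "m \<in> D" "act z m \<in> Ob" by blast
          have "act (act z m) (-m) \<in> \<Union>\<Q>'" using Ob(3) zm(3,4) by blast
          then have "z \<in> \<Union>\<Q>'" by (simp add: act_inv1[OF A])
          then show "Z \<in> {Z\<in>Zf D. Z \<inter> \<Union>\<Q>' \<noteq> {}}" using zm(1,2) by blast
        qed
        then have "finite {Z\<in>Zf D. \<exists>z\<in>Z. \<exists>m\<in>D. act z m \<in> Ob}" using fQ by (rule finite_subset)
        then show ?thesis using Ob(1,2) by blast
      qed
      have "\<forall>D\<in>\<D>. \<exists>Ob. open Ob \<and> y0 \<in> Ob \<and> finite {Z\<in>Zf D. \<exists>z\<in>Z. \<exists>m\<in>D. act z m \<in> Ob}"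
        using K3 by (intro ballI)
      from bchoice[OF this] obtain Of where Of0: "\<forall>D\<in>\<D>. open (Of D) \<and> y0 \<in> Of D \<and>
            finite {Z\<in>Zf D. \<exists>z\<in>Z. \<exists>m\<in>D. act z m \<in> Of D}"
        by (rule exE) (rule that)
      have Of: "open (Of D) \<and> y0 \<in> Of D \<and> finite {Z\<in>Zf D. \<exists>z\<in>Z. \<exists>m\<in>D. act z m \<in> Of D}"
        if "D \<in> \<D>" for D using Of0 that by (rule bspec)
      define Zs where "Zs D = {Z\<in>Zf D. \<exists>z\<in>Z. \<exists>m\<in>D. act z m \<in> Of D}" for D
      define Ob where "Ob = O1 \<inter> (\<Inter>D\<in>\<D>0. Of D)"
      have OfD0: "\<forall>D\<in>\<D>0. open (Of D)" using Of unfolding \<D>0_def by blast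
      have oOb: "open Ob" unfolding Ob_def by (rule open_Int[OF OC(1) open_INT[OF fD0 OfD0]])
      have yOb: "y0 \<in> Ob" unfolding Ob_def using OC(2) Of unfolding \<D>0_def by blast
      define V where "V = Y \<inter> Ob"
      have oV: "openin (top_of_set Y) V" unfolding V_def by (rule openin_open_Int[OF oOb])
      have yV: "y0 \<in> V" unfolding V_def using y0 yOb by simp
      define T where "T = (SIGMA D:\<D>0. SIGMA Z:Zs D. Mf D (fz D Z))"
      have fT: "finite T" unfolding T_def
      proof (intro finite_SigmaI fD0)
        fix D assume D0: "D \<in> \<D>0"
        then have DD: "D \<in> \<D>" unfolding \<D>0_def by blast
        show "finite (Zs D)" unfolding Zs_def using Of[OF DD] by (elim conjE)
        fix Z assume "Z \<in> Zs D"
        then have "Z \<in> Zf D" unfolding Zs_def by blast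
        then show "finite (Mf D (fz D Z))" by (rule MfF[OF DD])
      qed
      have "{U\<in>\<A>. U \<inter> V \<noteq> {}} \<subseteq> (\<lambda>(D, Z, M). img Z M) ` T"
      proof
        fix B assume "B \<in> {U\<in>\<A>. U \<inter> V \<noteq> {}}"
        then obtain D Z M y where B: "B = img Z M" "D \<in> \<D>" "Z \<in> Zf D" "M \<in> Mf D (fz D Z)"
          "y \<in> img Z M" "y \<in> V"
          unfolding \<A>_def by blast
        then obtain z m where zm: "y = act z m" "z \<in> Z" "m \<in> M" unfolding img_def by blast
        have "M \<subseteq> D" using MC[OF B(2,3,4)] by (elim conjE)
        then have mD: "m \<in> D" using zm(3) by blast
        have zF: "z \<in> F" using ZF[OF B(2,3)] zm(2) by blast
        have "y \<in> O1" using B(6) unfolding V_def Ob_def by blast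
        then have "act z m \<in> O1" using zm(1) by simp
        then have "m \<in> C" using OC(4) zF by blast
        then have D0: "D \<in> \<D>0" unfolding \<D>0_def using B(2) mD by blast
        then have "y \<in> Of D" using B(6) unfolding V_def Ob_def by blast
        then have "act z m \<in> Of D" using zm(1) by simp
        then have "Z \<in> Zs D" unfolding Zs_def using B(3) zm(2) mD by blast
        then have "(D, Z, M) \<in> T" unfolding T_def using D0 B(4) by simp
        then show "B \<in> (\<lambda>(D, Z, M). img Z M) ` T"
          by (rule image_eqI[rotated]) (simp add: B(1))
      qed
      then have "finite {U\<in>\<A>. U \<inter> V \<noteq> {}}" using fT by (meson finite_imageI finite_subset)
      then show "\<exists>V. openin (top_of_set Y) V \<and> y0 \<in> V \<and> finite {U\<in>\<A>. U \<inter> V \<noteq> {}}"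
        using oV yV by blast
    qed
  qed
qed

theorem corollary2p12:
  fixes act :: "'x::t2_space \<Rightarrow> 'g::{topological_group_add, t2_space} \<Rightarrow> 'x"
    and F :: "'x set"
  assumes "locally_compact_space (euclidean :: 'g topology)"
    and "cont_right_action act"
    and "closed F"
    and "paracompact_space (subtopology euclidean F)"
    and "F_proper act F"
  shows "closed {act x g | x g. x \<in> F} \<and>
         paracompact_space (subtopology euclidean {act x g | x g. x \<in> F})"
proof
  show "closed {act x g | x g. x \<in> F}" by (rule closed_orbit[OF assms(2,3,5)])
  show "paracompact_space (subtopology euclidean {act x g | x g. x \<in> F})"
    by (rule michael) (rule main_refine[OF assms refl], assumption+)
qed

end
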